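(* Let $G$ be a graph, let $\mathcal H$ be a family of subgraphs of $G$ each inducing a connected subgraph, and suppose $G$ has a tree decomposition that is $k$-sparse with respect to $\mathcal H$. Then $(G,\mathcal H)$ admits a dual support $Q^*$ with $\mathrm{tw}(Q^* )\le k$.
   Context: A subgraph $H$ of $G$ is identified with its vertex set $V(H)$. A tree decomposition $(T,\{B_z\})$ of $G$ is $k$-sparse with respect to $\mathcal H$ if every bag $B_z$ intersects at most $k$ members of $\mathcal H$. A dual support for $(G,\mathcal H)$ is a graph $Q^*$ whose vertex set is $\mathcal H$ (one vertex per member) such that for every $v\in V(G)$ the set $\mathcal H_v=\{H\in\mathcal H: v\in V(H)\}$ induces a connected subgraph of $Q^*$. $\mathrm{tw}$ denotes treewidth. *)

theory Defs
  imports Main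
begin

text \<open>Finite simple (undirected) graphs: a finite vertex set V and a symmetric,
irreflexive edge relation E on V (each undirected edge stored as both ordered pairs).\<close>
definition graph :: "'a set \<Rightarrow> ('a \<times> 'a) set \<Rightarrow> bool" where
  "graph V E \<longleftrightarrow> finite V \<and> E \<subseteq> V \<times> V \<and> (\<forall>x y. (x,y) \<in> E \<longrightarrow> (y,x) \<in> E)
                  \<and> (\<forall>x. (x,x) \<notin> E)"

text \<open>S induces a connected subgraph of (V,E): any two vertices of S are joined
by a path inside S (the empty set counts as connected).\<close>
definition connected_in :: "'a set \<Rightarrow> ('a \<times> 'a) set \<Rightarrow> 'a set \<Rightarrow> bool" where
  "connected_in V E S \<longleftrightarrow> S \<subseteq> V \<and> (\<forall>x\<in>S. \<forall>y\<in>S. (x,y) \<in> (E \<inter> (S \<times> S))\<^sup>*)"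

text \<open>A tree: a nonempty connected graph with |N|-1 undirected edges.\<close>
definition tree :: "'b set \<Rightarrow> ('b \<times> 'b) set \<Rightarrow> bool" where
  "tree N F \<longleftrightarrow> graph N F \<and> N \<noteq> {} \<and> connected_in N F N \<and> card F = 2 * (card N - 1)"

definition tree_decomp ::
  "'a set \<Rightarrow> ('a \<times> 'a) set \<Rightarrow> 'b set \<Rightarrow> ('b \<times> 'b) set \<Rightarrow> ('b \<Rightarrow> 'a set) \<Rightarrow> bool" where
  "tree_decomp V E N F B \<longleftrightarrow> tree N F \<and> (\<forall>z\<in>N. B z \<subseteq> V)
     \<and> (\<forall>v\<in>V. \<exists>z\<in>N. v \<in> B z)
     \<and> (\<forall>(u,v)\<in>E. \<exists>z\<in>N. u \<in> B z \<and> v \<in> B z)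
     \<and> (\<forall>v\<in>V. connected_in N F {z\<in>N. v \<in> B z})"

definition width :: "'b set \<Rightarrow> ('b \<Rightarrow> 'a set) \<Rightarrow> int" where
  "width N B = Max ((\<lambda>z. int (card (B z))) ` N) - 1"

text \<open>Treewidth: least width of a tree decomposition (tree nodes taken from nat,
which suffices for finite graphs).\<close>
definition treewidth :: "'a set \<Rightarrow> ('a \<times> 'a) set \<Rightarrow> int" where
  "treewidth V E = (LEAST w. \<exists>N F (B :: nat \<Rightarrow> 'a set). tree_decomp V E N F B \<and> width N B = w)"

text \<open>k-sparse w.r.t. a family of subgraphs (identified with vertex sets).\<close>
definition sparse_wrt :: "nat \<Rightarrow> 'a set set \<Rightarrow> 'b set \<Rightarrow> ('b \<Rightarrow> 'a set) \<Rightarrow> bool" where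
  "sparse_wrt k \<H> N B \<longleftrightarrow> (\<forall>z\<in>N. card {H\<in>\<H>. B z \<inter> H \<noteq> {}} \<le> k)"

definition dual_support :: "'a set \<Rightarrow> 'a set set \<Rightarrow> ('a set \<times> 'a set) set \<Rightarrow> bool" where
  "dual_support V \<H> Q \<longleftrightarrow> graph \<H> Q \<and> (\<forall>v\<in>V. connected_in \<H> Q {H\<in>\<H>. v \<in> H})"

end

theory Submission
  imports Defs
begin

lemma rtrancl_map_image:
  assumes "(x,y) \<in> R\<^sup>*"
  shows "(f x, f y) \<in> (map_prod f f ` R)\<^sup>*"
  using assms
proof (induction rule: rtrancl_induct)
  case base then show ?case by simp
next
  case (step y z)
  then have "(f y, f z) \<in> map_prod f f ` R" by force
  with step show ?case by (meson rtrancl.rtrancl_into_rtrancl)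
qed

lemma connected_in_image:
  assumes "connected_in V E S"
  shows "connected_in (f ` V) (map_prod f f ` E) (f ` S)"
  unfolding connected_in_def
proof (intro conjI ballI)
  show "f ` S \<subseteq> f ` V" using assms unfolding connected_in_def by auto
next
  fix x' y' assume "x' \<in> f ` S" "y' \<in> f ` S"
  then obtain x y where xy: "x \<in> S" "y \<in> S" "x' = f x" "y' = f y" by auto
  then have "(x,y) \<in> (E \<inter> S \<times> S)\<^sup>*" using assms unfolding connected_in_def by auto
  then have "(f x, f y) \<in> (map_prod f f ` (E \<inter> S \<times> S))\<^sup>*" by (rule rtrancl_map_image)
  moreover have "map_prod f f ` (E \<inter> S \<times> S) \<subseteq> map_prod f f ` E \<inter> f ` S \<times> f ` S" by auto
  ultimately show "(x', y') \<in> (map_prod f f ` E \<inter> f ` S \<times> f ` S)\<^sup>*"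
    using xy rtrancl_mono by blast
qed

lemma graph_image:
  assumes "graph N F" "inj_on f N"
  shows "graph (f ` N) (map_prod f f ` F)"
  unfolding graph_def
proof (intro conjI allI impI)
  show "finite (f ` N)" using assms unfolding graph_def by auto
  show "map_prod f f ` F \<subseteq> f ` N \<times> f ` N" using assms unfolding graph_def by auto
  fix x y assume "(x, y) \<in> map_prod f f ` F"
  then obtain a b where "(a,b) \<in> F" "x = f a" "y = f b" by auto
  then show "(y, x) \<in> map_prod f f ` F" using assms unfolding graph_def by force
next
  fix x show "(x, x) \<notin> map_prod f f ` F"
  proof
    assume "(x, x) \<in> map_prod f f ` F"
    then obtain a b where ab: "(a,b) \<in> F" "x = f a" "x = f b" by auto
    then have "a \<in> N" "b \<in> N" using assms unfolding graph_def by auto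
    then have "a = b" using ab assms(2) unfolding inj_on_def by auto
    then show False using ab assms unfolding graph_def by auto
  qed
qed

lemma transport:
  fixes N :: "'b set" and B :: "'b \<Rightarrow> 'a set"
  assumes "tree_decomp V E N F B"
  shows "\<exists>N' F' (B' :: nat \<Rightarrow> 'a set). tree_decomp V E N' F' B' \<and> width N' B' = width N B"
proof -
  have tr: "tree N F" using assms unfolding tree_decomp_def by auto
  then have fin: "finite N" and gr: "graph N F" unfolding tree_def graph_def by auto
  obtain f :: "'b \<Rightarrow> nat" where bij: "bij_betw f N {0..<card N}"
    using ex_bij_betw_finite_nat[OF fin] by blast
  then have inj: "inj_on f N" by (simp add: bij_betw_def)
  define g where "g = inv_into N f"
  have gf: "\<And>z. z \<in> N \<Longrightarrow> g (f z) = z" using inj by (simp add: g_def)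
  define B' where "B' = B \<circ> g"
  have FN: "F \<subseteq> N \<times> N" using gr unfolding graph_def by auto
  have injF: "inj_on (map_prod f f) F"
    using map_prod_inj_on[OF inj inj] FN inj_on_subset by blast
  have tr': "tree (f ` N) (map_prod f f ` F)"
    unfolding tree_def
  proof (intro conjI)
    show "graph (f ` N) (map_prod f f ` F)" by (rule graph_image[OF gr inj])
    show "f ` N \<noteq> {}" using tr unfolding tree_def by auto
    show "connected_in (f ` N) (map_prod f f ` F) (f ` N)"
      using tr unfolding tree_def by (auto intro: connected_in_image)
    show "card (map_prod f f ` F) = 2 * (card (f ` N) - 1)"
      using tr card_image[OF injF] card_image[OF inj] unfolding tree_def by simp
  qed
  have setv: "{z \<in> f ` N. v \<in> B' z} = f ` {z \<in> N. v \<in> B z}" for v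
    using gf unfolding B'_def by force
  have "tree_decomp V E (f ` N) (map_prod f f ` F) B'"
    unfolding tree_decomp_def
  proof (intro conjI)
    show "tree (f ` N) (map_prod f f ` F)" by (rule tr')
    show "\<forall>z\<in>f ` N. B' z \<subseteq> V" using assms gf unfolding tree_decomp_def B'_def by auto
    show "\<forall>v\<in>V. \<exists>z\<in>f ` N. v \<in> B' z"
    proof
      fix v assume "v \<in> V"
      then obtain z where "z \<in> N" "v \<in> B z" using assms unfolding tree_decomp_def by auto
      then show "\<exists>z\<in>f ` N. v \<in> B' z" using gf unfolding B'_def by force
    qed
    show "\<forall>(u, v)\<in>E. \<exists>z\<in>f ` N. u \<in> B' z \<and> v \<in> B' z"
    proof (intro ballI, clarify)
      fix u v assume "(u,v) \<in> E"
      then obtain z where "z \<in> N" "u \<in> B z" "v \<in> B z" using assms unfolding tree_decomp_def by fastforce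
      then show "\<exists>z\<in>f ` N. u \<in> B' z \<and> v \<in> B' z" using gf unfolding B'_def by force
    qed
    show "\<forall>v\<in>V. connected_in (f ` N) (map_prod f f ` F) {z \<in> f ` N. v \<in> B' z}"
      using assms unfolding tree_decomp_def setv by (auto intro: connected_in_image)
  qed
  moreover have "width (f ` N) B' = width N B"
  proof -
    have "(\<lambda>z. int (card (B' z))) ` f ` N = (\<lambda>z. int (card (B z))) ` N"
      using gf unfolding B'_def by (force simp: image_image)
    then show ?thesis unfolding width_def by simp
  qed
  ultimately show ?thesis by blast
qed

lemma width_ge:
  assumes "tree_decomp V E N F B"
  shows "width N B \<ge> -1"
proof -
  have "finite N" "N \<noteq> {}" using assms unfolding tree_decomp_def tree_def graph_def by auto
  then have "Max ((\<lambda>z. int (card (B z))) ` N) \<in> (\<lambda>z. int (card (B z))) ` N" by simp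
  then show ?thesis unfolding width_def by auto
qed

lemma treewidth_le:
  assumes "tree_decomp V E N F (B :: nat \<Rightarrow> 'a set)"
  shows "treewidth V E \<le> width N B"
proof -
  define P where "P w \<longleftrightarrow> (\<exists>N F (B :: nat \<Rightarrow> 'a set). tree_decomp V E N F B \<and> width N B = w)" for w
  have Pge: "P w \<Longrightarrow> w \<ge> -1" for w unfolding P_def using width_ge by blast
  have P0: "P (width N B)" unfolding P_def using assms by blast
  define n0 where "n0 = (LEAST n::nat. P (int n - 1))"
  have ex: "P (int (nat (width N B + 1)) - 1)" using P0 Pge[OF P0] by simp
  have Pn0: "P (int n0 - 1)" unfolding n0_def by (rule LeastI[of "\<lambda>n. P (int n - 1)", OF ex])
  have le0: "n0 \<le> nat (width N B + 1)" unfolding n0_def by (rule Least_le[of "\<lambda>n. P (int n - 1)", OF ex])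
  have "treewidth V E = int n0 - 1"
    unfolding treewidth_def P_def[symmetric]
  proof (rule Least_equality)
    show "P (int n0 - 1)" by (rule Pn0)
    fix y assume "P y"
    moreover have "int (nat (y + 1)) - 1 = y" using Pge[OF \<open>P y\<close>] by linarith
    ultimately have "P (int (nat (y + 1)) - 1)" by metis
    then have "n0 \<le> nat (y+1)" unfolding n0_def by (rule Least_le)
    then show "int n0 - 1 \<le> y" using Pge[OF \<open>P y\<close>] by simp
  qed
  then show ?thesis using le0 Pge[OF P0] by simp
qed

theorem mainTheorem10:
  fixes V :: "'a set" and E :: "('a \<times> 'a) set" and \<H> :: "'a set set"
    and N :: "'b set" and F :: "('b \<times> 'b) set" and B :: "'b \<Rightarrow> 'a set" and k :: nat
  assumes "graph V E"
    and "\<forall>H\<in>\<H>. H \<subseteq> V \<and> connected_in V E H"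
    and "tree_decomp V E N F B"
    and "sparse_wrt k \<H> N B"
  shows "\<exists>Q. dual_support V \<H> Q \<and> treewidth \<H> Q \<le> int k"
proof -
  note gV = assms(1) and Hc = assms(2) and td = assms(3) and sp = assms(4)
  have finV: "finite V" and EV: "E \<subseteq> V \<times> V" using gV unfolding graph_def by auto
  have finH: "finite \<H>" by (rule finite_subset[of _ "Pow V"]) (use Hc finV in auto)
  have tr: "tree N F" and BV: "\<forall>z\<in>N. B z \<subseteq> V" and cov: "\<forall>v\<in>V. \<exists>z\<in>N. v \<in> B z"
    and ecov: "\<forall>(u,v)\<in>E. \<exists>z\<in>N. u \<in> B z \<and> v \<in> B z"
    and sub: "\<forall>v\<in>V. connected_in N F {z\<in>N. v \<in> B z}"
    using td unfolding tree_decomp_def by auto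
  have finN: "finite N" and Nne: "N \<noteq> {}" and Nconn: "connected_in N F N"
    using tr unfolding tree_def graph_def by auto
  define Q where "Q = {(H,H'). H \<in> \<H> \<and> H' \<in> \<H> \<and> H \<noteq> H' \<and> H \<inter> H' \<noteq> {}}"
  define C where "C z = {H \<in> \<H>. H \<inter> B z \<noteq> {}} \<union> (\<H> \<inter> {{}})" for z
  have gQ: "graph \<H> Q" unfolding graph_def Q_def using finH by auto
  have ds: "dual_support V \<H> Q"
    unfolding dual_support_def
  proof (intro conjI ballI gQ)
    fix v assume "v \<in> V"
    show "connected_in \<H> Q {H \<in> \<H>. v \<in> H}"
      unfolding connected_in_def
    proof (intro conjI ballI)
      show "{H \<in> \<H>. v \<in> H} \<subseteq> \<H>" by auto
      fix H H' assume a: "H \<in> {H \<in> \<H>. v \<in> H}" "H' \<in> {H \<in> \<H>. v \<in> H}"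
      show "(H, H') \<in> (Q \<inter> {H \<in> \<H>. v \<in> H} \<times> {H \<in> \<H>. v \<in> H})\<^sup>*"
      proof (cases "H = H'")
        case True then show ?thesis by simp
      next
        case False
        then have "(H, H') \<in> Q \<inter> {H \<in> \<H>. v \<in> H} \<times> {H \<in> \<H>. v \<in> H}"
          using a unfolding Q_def by auto
        then show ?thesis by blast
      qed
    qed
  qed
  have Zconn: "connected_in N F {z \<in> N. H \<inter> B z \<noteq> {}}" if HH: "H \<in> \<H>" for H
  proof -
    define Z where "Z = {z \<in> N. H \<inter> B z \<noteq> {}}"
    have HV: "H \<subseteq> V" and Hcon: "connected_in V E H" using Hc HH by auto
    have step1: "(w, y) \<in> (F \<inter> Z \<times> Z)\<^sup>*"
      if "d \<in> H" "w \<in> N" "y \<in> N" "d \<in> B w" "d \<in> B y" for d w y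
    proof -
      have "d \<in> V" using HV that by auto
      then have "(w,y) \<in> (F \<inter> {z\<in>N. d \<in> B z} \<times> {z\<in>N. d \<in> B z})\<^sup>*"
        using sub that unfolding connected_in_def by auto
      moreover have "F \<inter> {z\<in>N. d \<in> B z} \<times> {z\<in>N. d \<in> B z} \<subseteq> F \<inter> Z \<times> Z"
        unfolding Z_def using that by auto
      ultimately show ?thesis using rtrancl_mono by blast
    qed
    have main: "\<And>y. y \<in> N \<Longrightarrow> b \<in> B y \<Longrightarrow> (x, y) \<in> (F \<inter> Z \<times> Z)\<^sup>*"
      if "(a,b) \<in> (E \<inter> H \<times> H)\<^sup>*" "a \<in> H" "x \<in> N" "a \<in> B x" for a b x
      using that(1)
    proof (induction rule: rtrancl_induct)
      case base
      then show ?case using step1 that by blast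
    next
      case (step c d y)
      then have cd: "(c,d) \<in> E" "c \<in> H" "d \<in> H" by auto
      then obtain w where w: "w \<in> N" "c \<in> B w" "d \<in> B w" using ecov by fastforce
      have "(x, w) \<in> (F \<inter> Z \<times> Z)\<^sup>*" using step.IH w by blast
      moreover have "(w, y) \<in> (F \<inter> Z \<times> Z)\<^sup>*" using step1[OF cd(3) w(1) step.prems(1) w(3) step.prems(2)] .
      ultimately show ?case by (rule rtrancl_trans)
    qed
    show ?thesis unfolding Z_def[symmetric] unfolding connected_in_def
    proof (intro conjI ballI)
      show "Z \<subseteq> N" unfolding Z_def by auto
      fix x y assume "x \<in> Z" "y \<in> Z"
      then obtain a b where ab: "a \<in> H" "a \<in> B x" "b \<in> H" "b \<in> B y" "x \<in> N" "y \<in> N"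
        unfolding Z_def by auto
      then have "(a,b) \<in> (E \<inter> H \<times> H)\<^sup>*" using Hcon unfolding connected_in_def by auto
      then show "(x, y) \<in> (F \<inter> Z \<times> Z)\<^sup>*" using main ab by blast
    qed
  qed
  have tdQ: "tree_decomp \<H> Q N F C"
    unfolding tree_decomp_def
  proof (intro conjI tr)
    show "\<forall>z\<in>N. C z \<subseteq> \<H>" unfolding C_def by auto
    show "\<forall>H\<in>\<H>. \<exists>z\<in>N. H \<in> C z"
    proof
      fix H assume H: "H \<in> \<H>"
      show "\<exists>z\<in>N. H \<in> C z"
      proof (cases "H = {}")
        case True then show ?thesis using Nne H unfolding C_def by auto
      next
        case False
        then obtain v where "v \<in> H" by auto
        moreover then have "v \<in> V" using Hc H by auto
        ultimately obtain z where "z \<in> N" "v \<in> B z" using cov by blast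
        then show ?thesis using H \<open>v \<in> H\<close> unfolding C_def by auto
      qed
    qed
    show "\<forall>(H, H')\<in>Q. \<exists>z\<in>N. H \<in> C z \<and> H' \<in> C z"
    proof (intro ballI, clarify)
      fix H H' assume "(H,H') \<in> Q"
      then obtain v where v: "v \<in> H" "v \<in> H'" "H \<in> \<H>" "H' \<in> \<H>" unfolding Q_def by auto
      then have "v \<in> V" using Hc by auto
      then obtain z where "z \<in> N" "v \<in> B z" using cov by blast
      then show "\<exists>z\<in>N. H \<in> C z \<and> H' \<in> C z" using v unfolding C_def by auto
    qed
    show "\<forall>H\<in>\<H>. connected_in N F {z \<in> N. H \<in> C z}"
    proof
      fix H assume H: "H \<in> \<H>"
      show "connected_in N F {z \<in> N. H \<in> C z}"
      proof (cases "H = {}")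
        case True
        then have "{z \<in> N. H \<in> C z} = N" using H unfolding C_def by auto
        then show ?thesis using Nconn by simp
      next
        case False
        then have "{z \<in> N. H \<in> C z} = {z \<in> N. H \<inter> B z \<noteq> {}}" using H unfolding C_def by auto
        then show ?thesis using Zconn[OF H] by simp
      qed
    qed
  qed
  have wid: "width N C \<le> int k"
  proof -
    have "card (C z) \<le> k + 1" if "z \<in> N" for z
    proof -
      have "card (C z) \<le> card {H \<in> \<H>. H \<inter> B z \<noteq> {}} + card (\<H> \<inter> {{}})"
        unfolding C_def by (rule card_Un_le)
      moreover have "card {H \<in> \<H>. H \<inter> B z \<noteq> {}} \<le> k"
        using sp that unfolding sparse_wrt_def by (simp add: Int_commute)
      moreover have "card (\<H> \<inter> {{}}) \<le> 1"
        using card_mono[of "{{}}" "\<H> \<inter> {{}}"] by auto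
      ultimately show ?thesis by linarith
    qed
    then have "\<forall>z\<in>N. int (card (C z)) \<le> int k + 1" by fastforce
    then have "Max ((\<lambda>z. int (card (C z))) ` N) \<le> int k + 1"
      using finN Nne by (subst Max_le_iff) auto
    then show ?thesis unfolding width_def by simp
  qed
  obtain N' F' and C' :: "nat \<Rightarrow> 'a set set" where "tree_decomp \<H> Q N' F' C'" "width N' C' = width N C"
    using transport[OF tdQ] by blast
  then have "treewidth \<H> Q \<le> int k" using treewidth_le wid by fastforce
  with ds show ?thesis by blast
qed

end
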